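(* Let $G=(V,A)$ be a graph and $\mathfrak n=\mathfrak n(G)$ as below, and let $S:W^*\to W$ be an antisymmetric linear map with $T_\alpha ST_\beta+T_\beta ST_\alpha=0$ for all $\alpha,\beta\in A$. Write $S_{i,j}$ for its matrix entries with respect to the bases $\{e_i^*\}$ of $W^*$ and $\{e_i\}$ of $W$. Then: (1) if there is an edge joining $e_i$ and $e_j$, then $S_{i,j}=0$; (2) if there are edges $\alpha$ joining $e_i$ and $e_{i'}$ and $\beta$ joining $e_j$ and $e_{j'}$ with $\{i,i'\}\cap\{j,j'\}=\emptyset$, then $S_{i,j}=0$.
   Context: $G=(V,A)$ is a finite simple graph without loops and without isolated vertices, $V=\{e_1,\dots,e_n\}$ ordered, each edge joining $e_i,e_j$ ($i<j$) oriented from $e_i$ to $e_j$. $\mathfrak n(G)$ has basis $V\cup A$, $[e_i,e_j]=\alpha$ if $\alpha$ goes from $e_i$ to $e_j$, $[e_i,e_j]=0$ if not adjacent, edges central; $W=\mathrm{span}(V)$, center $\mathfrak z=\mathrm{span}(A)$. For $\alpha\in A$ define $T_\alpha:W\to W^*$ by $[v,w]=\sum_{\alpha}T_\alpha(v)(w)\alpha$; explicitly, if $\alpha$ joins $e_i$ to $e_j$ with $i<j$, then $T_\alpha(e_i)=e_j^*$, $T_\alpha(e_j)=-e_i^*$, $T_\alpha(e_k)=0$ for $k\ne i,j$. $S$ antisymmetric means $S^t=-S$ under $W^{**}\cong W$. *)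

theory Defs
  imports Complex_Main
begin

(* Vertices e_0,...,e_{n-1} are indexed by 0..<n.  An edge joining e_i and e_j with i<j
   (oriented from e_i to e_j) is the pair (i,j) in A. *)

definition graph_ok :: "nat \<Rightarrow> (nat \<times> nat) set \<Rightarrow> bool" where
  "graph_ok n A \<longleftrightarrow> A \<subseteq> {(i,j). i < j \<and> j < n}
      \<and> (\<forall>k<n. \<exists>(i,j)\<in>A. k = i \<or> k = j)"

definition joins :: "(nat \<times> nat) set \<Rightarrow> nat \<Rightarrow> nat \<Rightarrow> bool" where
  "joins A i j \<longleftrightarrow> (i,j) \<in> A \<or> (j,i) \<in> A"

(* Matrix of T_alpha : W -> W^dual w.r.t. bases {e_l} and {e_k^dual}:
   T_alpha(e_l) = sum_k Tmat alpha k l * e_k^dual.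
   For alpha = (i,j), i<j: T(e_i) = e_j^dual, T(e_j) = - e_i^dual. *)
definition Tmat :: "nat \<times> nat \<Rightarrow> nat \<Rightarrow> nat \<Rightarrow> real" where
  "Tmat \<alpha> k l = (if k = snd \<alpha> \<and> l = fst \<alpha> then 1
                  else if k = fst \<alpha> \<and> l = snd \<alpha> then -1 else 0)"

(* Matrix of T_alpha S T_beta : W -> W^dual, where S : W^dual -> W has matrix S
   (S(e_q^dual) = sum_p S p q * e_p). *)
definition TST :: "nat \<Rightarrow> nat \<times> nat \<Rightarrow> (nat \<Rightarrow> nat \<Rightarrow> real) \<Rightarrow> nat \<times> nat \<Rightarrow> nat \<Rightarrow> nat \<Rightarrow> real" where
  "TST n \<alpha> S \<beta> k l = (\<Sum>p<n. \<Sum>q<n. Tmat \<alpha> k p * S p q * Tmat \<beta> q l)"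

definition antisym_mat :: "nat \<Rightarrow> (nat \<Rightarrow> nat \<Rightarrow> real) \<Rightarrow> bool" where
  "antisym_mat n S \<longleftrightarrow> (\<forall>i<n. \<forall>j<n. S j i = - S i j)"

end

theory Submission
  imports Defs
begin

lemma sumL:
  assumes "a \<noteq> b" "a < n" "b < n"
  shows "(\<Sum>p<n. Tmat (a,b) k p * f p) = (if k = b then f a else if k = a then - f b else 0)"
proof -
  have "(\<Sum>p<n. Tmat (a,b) k p * f p) = (\<Sum>p<n. (if p = a then (if k = b then f a else 0) else 0)
      + (if p = b then (if k = a then - f b else 0) else 0))"
    by (rule sum.cong) (use assms in \<open>auto simp: Tmat_def\<close>)
  also have "\<dots> = (if k = b then f a else 0) + (if k = a then - f b else 0)"
    using assms by (simp add: sum.distrib)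
  finally show ?thesis using assms by auto
qed

lemma sumR:
  assumes "c \<noteq> d" "c < n" "d < n"
  shows "(\<Sum>q<n. g q * Tmat (c,d) q l) = (if l = c then g d else if l = d then - g c else 0)"
proof -
  have "(\<Sum>q<n. g q * Tmat (c,d) q l) = (\<Sum>q<n. (if q = d then (if l = c then g d else 0) else 0)
      + (if q = c then (if l = d then - g c else 0) else 0))"
    by (rule sum.cong) (use assms in \<open>auto simp: Tmat_def\<close>)
  also have "\<dots> = (if l = c then g d else 0) + (if l = d then - g c else 0)"
    using assms by (simp add: sum.distrib)
  finally show ?thesis using assms by auto
qed

lemma TST_eq:
  assumes "a < b" "b < n" "c < d" "d < n"
  shows "TST n (a,b) S (c,d) k l =
    (if k = b then (if l = c then S a d else if l = d then - S a c else 0)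
     else if k = a then - (if l = c then S b d else if l = d then - S b c else 0) else 0)"
    (is "_ = ?rhs")
proof -
  have "TST n (a,b) S (c,d) k l = (\<Sum>p<n. Tmat (a,b) k p * (\<Sum>q<n. S p q * Tmat (c,d) q l))"
    unfolding TST_def by (simp add: sum_distrib_left mult.assoc)
  also have "\<dots> = (\<Sum>p<n. Tmat (a,b) k p * (if l = c then S p d else if l = d then - S p c else 0))"
    using assms by (simp add: sumR)
  also have "\<dots> = ?rhs"
    by (rule sumL[where f="\<lambda>p. (if l = c then S p d else if l = d then - S p c else 0)"]) (use assms in auto)
  finally show ?thesis .
qed

theorem mainTheorem11:
  fixes n :: nat and A :: "(nat \<times> nat) set" and S :: "nat \<Rightarrow> nat \<Rightarrow> real"
  assumes "graph_ok n A"
    and "antisym_mat n S"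
    and "\<forall>\<alpha>\<in>A. \<forall>\<beta>\<in>A. \<forall>k<n. \<forall>l<n. TST n \<alpha> S \<beta> k l + TST n \<beta> S \<alpha> k l = 0"
  shows "(\<forall>i<n. \<forall>j<n. joins A i j \<longrightarrow> S i j = 0)
       \<and> (\<forall>i i' j j'. joins A i i' \<and> joins A j j' \<and> {i, i'} \<inter> {j, j'} = {} \<longrightarrow> S i j = 0)"
proof -
  have Ain: "\<And>a b. (a,b) \<in> A \<Longrightarrow> a < b \<and> b < n" using assms(1) unfolding graph_ok_def by auto
  have as: "\<And>i j. i < n \<Longrightarrow> j < n \<Longrightarrow> S j i = - S i j" using assms(2) unfolding antisym_mat_def by blast
  have E: "\<And>a b c d k l. (a,b) \<in> A \<Longrightarrow> (c,d) \<in> A \<Longrightarrow> k < n \<Longrightarrow> l < n \<Longrightarrow>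
      TST n (a,b) S (c,d) k l + TST n (c,d) S (a,b) k l = 0"
    using assms(3) by blast
  have edge: "S a b = 0" if "(a,b) \<in> A" for a b
  proof -
    from Ain[OF that] have ab: "a < b" "b < n" by auto
    have "TST n (a,b) S (a,b) b a + TST n (a,b) S (a,b) b a = 0" using E[OF that that, of b a] ab by simp
    then show ?thesis using ab by (simp add: TST_eq)
  qed
  have disj: "S x y = 0" if "(a,b) \<in> A" "(c,d) \<in> A" "{a,b} \<inter> {c,d} = {}" "x \<in> {a,b}" "y \<in> {c,d}" for a b c d x y
  proof -
    from Ain[OF that(1)] Ain[OF that(2)] have ab: "a < b" "b < n" "c < d" "d < n" by auto
    have e1: "TST n (a,b) S (c,d) k l + TST n (c,d) S (a,b) k l = 0" if "k < n" "l < n" for k l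
      using E[OF \<open>(a,b) \<in> A\<close> \<open>(c,d) \<in> A\<close> that] .
    have "S a d = 0" using e1[of b c] ab that(3) by (simp add: TST_eq)
    moreover have "S a c = 0" using e1[of b d] ab that(3) by (simp add: TST_eq)
    moreover have "S b d = 0" using e1[of a c] ab that(3) by (simp add: TST_eq)
    moreover have "S b c = 0" using e1[of a d] ab that(3) by (simp add: TST_eq)
    ultimately show ?thesis using that(4,5) by auto
  qed
  have p1: "\<forall>i<n. \<forall>j<n. joins A i j \<longrightarrow> S i j = 0"
  proof (intro allI impI)
    fix i j assume h: "i < n" "j < n" "joins A i j"
    show "S i j = 0"
    proof (cases "(i,j) \<in> A")
      case True then show ?thesis by (rule edge)
    next
      case False
      then have "(j,i) \<in> A" using h(3) unfolding joins_def by blast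
      then have "S j i = 0" by (rule edge)
      then show ?thesis using as[OF h(1,2)] by linarith
    qed
  qed
  have p2: "\<forall>i i' j j'. joins A i i' \<and> joins A j j' \<and> {i, i'} \<inter> {j, j'} = {} \<longrightarrow> S i j = 0"
  proof (intro allI impI)
    fix i i' j j' assume h: "joins A i i' \<and> joins A j j' \<and> {i, i'} \<inter> {j, j'} = {}"
    obtain a b where ab: "(a,b) \<in> A" "{a,b} = {i,i'}" using h unfolding joins_def by (metis insert_commute)
    obtain c d where cd: "(c,d) \<in> A" "{c,d} = {j,j'}" using h unfolding joins_def by (metis insert_commute)
    show "S i j = 0" by (rule disj[OF ab(1) cd(1)]) (use h ab cd in auto)
  qed
  show ?thesis using p1 p2 by blast
qed

end
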